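(* Let $D_n=\sum_{k=0}^n\binom{n}{k}^2\binom{2k}{k}\binom{2(n-k)}{n-k}$ for $n\ge 0$ (the Domb numbers). Then the ratio sequence $\{D_{n+1}/D_n\}_{n\ge 0}$ is ratio log-convex, i.e. the sequence $\{y_n\}_{n\ge0}$ with $y_n=\frac{D_{n+2}D_n}{D_{n+1}^2}$ satisfies $y_{n-1}y_{n+1}\ge y_n^2$ for all $n\ge 1$.
   Context: A sequence $\{x_n\}$ of positive numbers is log-convex if $x_{n-1}x_{n+1}\ge x_n^2$ for all $n\ge1$; it is called ratio log-convex if $\{x_{n+1}/x_n\}$ is log-convex. *)

theory Defs
  imports Complex_Main
begin

definition domb :: "nat \<Rightarrow> nat" where
  "domb n = (\<Sum>k=0..n. (n choose k)^2 * ((2*k) choose k) * ((2*(n-k)) choose (n-k)))"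

definition log_convex :: "(nat \<Rightarrow> real) \<Rightarrow> bool" where
  "log_convex x \<longleftrightarrow> (\<forall>n\<ge>1. x (n-1) * x (n+1) \<ge> (x n)^2)"

definition ratio_log_convex :: "(nat \<Rightarrow> real) \<Rightarrow> bool" where
  "ratio_log_convex x \<longleftrightarrow> log_convex (\<lambda>n. x (n+1) / x n)"

end

theory Submission
  imports Defs
begin


definition Qp :: "real \<Rightarrow> real \<Rightarrow> real" where
"Qp n k = (-112) + (372)*k^1 + (-356)*k^2 + (128)*k^3 + (-16)*k^4 + (-712)*n^1 + (1820)*n^1*k^1 + (-1402)*n^1*k^2 + (408)*n^1*k^3 + (-40)*n^1*k^4 + (-1844)*n^2 + (3625)*n^2*k^1 + (-2168)*n^2*k^2 + (476)*n^2*k^3 + (-32)*n^2*k^4 + (-2542)*n^3 + (3758)*n^3*k^1 + (-1642)*n^3*k^2 + (240)*n^3*k^3 + (-8)*n^3*k^4 + (-2024)*n^4 + (2137)*n^4*k^1 + (-608)*n^4*k^2 + (44)*n^4*k^3 + (-934)*n^5 + (632)*n^5*k^1 + (-88)*n^5*k^2 + (-232)*n^6 + (76)*n^6*k^1 + (-24)*n^7"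

lemma poly_id:
  fixes K M :: real
  shows "((K+M+2)^3*(K+M+2)^2*(K+M+1)^2*(2*M+4)*(2*M+3)*(2*M+2)*(2*M+1)*(K+1)^4
          - 2*(2*(K+M)+3)*(5*(K+M)^2+15*(K+M)+12)*(K+M+1)^2*(2*M+2)*(2*M+1)*(K+1)^4*(M+2)^4
          + 64*(K+M+1)^3*(K+1)^4*(M+1)^4*(M+2)^4)
         * ((K+M+1)^2*(K+M+2)^3*(2*M+1)) * (2*M-1) * (2*M+3)
       = ((K+M+2)^2*(K+M+1)^2*(2*K+2)*(2*K+1)*(2*M+2)*(2*M+1)*(M+2)^4*(K+1)^3*Qp (K+M) (K+1)) * (2*M+3)
         - ((K+M+2)^2*(K+M+1)^2*(2*M+4)*(2*M+3)*(2*M+2)*(2*M+1)*(K+1)^4*K^3*Qp (K+M) K) * (2*M-1)"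
  unfolding Qp_def by algebra

definition fr :: "nat \<Rightarrow> nat \<Rightarrow> real" where
  "fr n k = real ((n choose k)^2 * ((2*k) choose k) * ((2*(n-k)) choose (n-k)))"

lemma fr_zero: "n < k \<Longrightarrow> fr n k = 0"
  by (simp add: fr_def)

lemma fr_fact: "k \<le> n \<Longrightarrow> fr n k = fact n^2 * fact (2*k) * fact (2*(n-k)) / (fact k^4 * fact (n-k)^4)"
proof -
  assume kn: "k \<le> n"
  have a: "real (n choose k) = fact n / (fact k * fact (n-k))" using kn by (rule binomial_fact)
  have b: "real ((2*k) choose k) = fact (2*k) / (fact k * fact k)"
    using binomial_fact[of k "2*k", where 'a=real] by simp
  have c: "real ((2*(n-k)) choose (n-k)) = fact (2*(n-k)) / (fact (n-k) * fact (n-k))"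
    using binomial_fact[of "n-k" "2*(n-k)", where 'a=real] by simp
  show ?thesis unfolding fr_def of_nat_mult of_nat_power a b c
    by (simp add: field_simps power2_eq_square eval_nat_numeral)
qed

definition gg :: "nat \<Rightarrow> nat \<Rightarrow> real" where
  "gg n k = fr (n+2) k * real k^3 * Qp (real n) (real k) /
     ((real n+1)^2*(real n+2)^3*(2*real n-2*real k+1)*(2*real n-2*real k+3))"

definition tt :: "nat \<Rightarrow> nat \<Rightarrow> real" where
  "tt n k = (real n+2)^3 * fr (n+2) k - 2*(2*real n+3)*(5*real n^2+15*real n+12)*fr (n+1) k
           + 64*(real n+1)^3 * fr n k"

lemma frac_comb: fixes B p0 p1 E a b :: real
  assumes "E \<noteq> 0" "a \<noteq> 0" "b \<noteq> 0"
  shows "B*p1/(E*a) - B*p0/(E*b) = B*(p1*b - p0*a)/(E*a*b)"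
  using assms by (simp add: field_simps)

lemma hdiv: fixes x1 x2 d1 d2 c :: real
  assumes "d1 \<noteq> 0" "d2 \<noteq> 0" "x1 * d2 = x2 * c * d1"
  shows "x1/d1 = x2/d2 * c"
  using assms by (simp add: field_simps)

lemma cancel3: fixes B T E a b :: real
  assumes "E \<noteq> 0" "a \<noteq> 0" "b \<noteq> 0"
  shows "B*(T*E*a*b)/(E*a*b) = B*T"
  using assms by simp


lemma id0: fixes fn fk fm f2k f2m K M :: real shows
 "fn^2 * f2k * f2m * (((K+1)*fk)^4 * ((M+2)*(M+1)*fm)^4) = fn^2 * f2k * f2m * ((K+1)^4*(M+1)^4*(M+2)^4) * (fk^4 * fm^4)"
  by algebra
lemma id1: fixes fn fk fm f2k f2m K M :: real shows
 "((K+M+1)*fn)^2 * f2k * ((2*M+2)*(2*M+1)*f2m) * (((K+1)*fk)^4 * ((M+2)*(M+1)*fm)^4) = fn^2 * f2k * f2m * ((K+M+1)^2*(2*M+2)*(2*M+1)*(K+1)^4*(M+2)^4) * (fk^4 * ((M+1)*fm)^4)"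
  by algebra
lemma id2: fixes fn fk fm f2k f2m K M :: real shows
 "((K+M+2)*(K+M+1)*fn)^2 * f2k * ((2*M+4)*(2*M+3)*(2*M+2)*(2*M+1)*f2m) * (((K+1)*fk)^4 * ((M+2)*(M+1)*fm)^4) = fn^2 * f2k * f2m * ((K+M+2)^2*(K+M+1)^2*(2*M+4)*(2*M+3)*(2*M+2)*(2*M+1)*(K+1)^4) * (fk^4 * ((M+2)*(M+1)*fm)^4)"
  by algebra
lemma id3: fixes fn fk fm f2k f2m K M :: real shows
 "((K+M+2)*(K+M+1)*fn)^2 * ((2*K+2)*(2*K+1)*f2k) * ((2*M+2)*(2*M+1)*f2m) * (((K+1)*fk)^4 * ((M+2)*(M+1)*fm)^4) = fn^2 * f2k * f2m * ((K+M+2)^2*(K+M+1)^2*(2*K+2)*(2*K+1)*(2*M+2)*(2*M+1)*(M+2)^4) * (((K+1)*fk)^4 * ((M+1)*fm)^4)"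
  by algebra
lemma idT: fixes B K M :: real shows
 "(K+M+2)^3 * (B * ((K+M+2)^2*(K+M+1)^2*(2*M+4)*(2*M+3)*(2*M+2)*(2*M+1)*(K+1)^4))
   - 2*(2*(K+M)+3)*(5*(K+M)^2+15*(K+M)+12) * (B * ((K+M+1)^2*(2*M+2)*(2*M+1)*(K+1)^4*(M+2)^4))
   + 64*(K+M+1)^3 * (B * ((K+1)^4*(M+1)^4*(M+2)^4))
  = B * ((K+M+2)^3*(K+M+2)^2*(K+M+1)^2*(2*M+4)*(2*M+3)*(2*M+2)*(2*M+1)*(K+1)^4
          - 2*(2*(K+M)+3)*(5*(K+M)^2+15*(K+M)+12)*(K+M+1)^2*(2*M+2)*(2*M+1)*(K+1)^4*(M+2)^4
          + 64*(K+M+1)^3*(K+1)^4*(M+1)^4*(M+2)^4)"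
  by algebra

lemma tele_generic:
  assumes kn: "k \<le> n"
  shows "tt n k = gg n (k+1) - gg n k"
proof -
  obtain m where nm: "n = k + m" using kn le_Suc_ex by blast
  define K where "K = real k"
  define M where "M = real m"
  have K0: "K \<ge> 0" and M0: "M \<ge> 0" unfolding K_def M_def by auto
  define fn where "fn = (fact (k+m) :: real)"
  define fk where "fk = (fact k :: real)"
  define fm where "fm = (fact m :: real)"
  define f2k where "f2k = (fact (2*k) :: real)"
  define f2m where "f2m = (fact (2*m) :: real)"
  have nz: "fk \<noteq> 0" "fm \<noteq> 0" "K+1 \<noteq> 0" "M+1 \<noteq> 0" "M+2 \<noteq> 0" "K+M+1 \<noteq> 0" "K+M+2 \<noteq> 0"
    using K0 M0 unfolding fk_def fm_def by auto
  define B where "B = fn^2 * f2k * f2m / (((K+1)*fk)^4 * ((M+2)*(M+1)*fm)^4)"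
  have fk1: "fact (k+1) = (K+1) * fk" unfolding K_def fk_def by (simp add: algebra_simps)
  have fm1: "fact (m+1) = (M+1) * fm" unfolding M_def fm_def by (simp add: algebra_simps)
  have fm2: "fact (m+2) = (M+2)*(M+1) * fm" unfolding M_def fm_def
    by (simp add: algebra_simps eval_nat_numeral)
  have fn1: "fact (k+m+1) = (K+M+1) * fn" unfolding K_def M_def fn_def
    by (simp add: algebra_simps)
  have fn2: "fact (k+m+2) = (K+M+2)*(K+M+1) * fn" unfolding K_def M_def fn_def
    by (simp add: algebra_simps eval_nat_numeral)
  have f2k1: "fact (2*(k+1)) = (2*K+2)*(2*K+1) * f2k" unfolding K_def f2k_def
    by (simp add: algebra_simps eval_nat_numeral)
  have f2m1: "fact (2*(m+1)) = (2*M+2)*(2*M+1) * f2m" unfolding M_def f2m_def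
    by (simp add: algebra_simps eval_nat_numeral)
  have f2m2: "fact (2*(m+2)) = (2*M+4)*(2*M+3)*(2*M+2)*(2*M+1) * f2m" unfolding M_def f2m_def
    by (simp add: algebra_simps eval_nat_numeral)
  have d0: "((K+1)*fk)^4 * ((M+2)*(M+1)*fm)^4 \<noteq> 0" using nz by simp
  have e0: "fr n k = B * ((K+1)^4*(M+1)^4*(M+2)^4)"
  proof -
    have "fr n k = fn^2 * f2k * f2m / (fk^4 * fm^4)"
      unfolding nm fr_fact[OF le_add1] fn_def fk_def fm_def f2k_def f2m_def by simp
    also have "\<dots> = B * ((K+1)^4*(M+1)^4*(M+2)^4)" unfolding B_def
      apply (rule hdiv)
      apply (use nz d0 in simp)
     apply (use nz d0 in simp)
    apply (rule id0)
    done
    finally show ?thesis .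
  qed
  have e1: "fr (n+1) k = B * ((K+M+1)^2*(2*M+2)*(2*M+1)*(K+1)^4*(M+2)^4)"
  proof -
    have "fr (n+1) k = ((K+M+1)*fn)^2 * f2k * ((2*M+2)*(2*M+1)*f2m) / (fk^4 * ((M+1)*fm)^4)"
      using fr_fact[of k "k+m+1"] unfolding nm fn1[symmetric] fm1[symmetric] f2m1[symmetric] fk_def f2k_def
      by (simp add: mult_2_right)
    also have "\<dots> = B * ((K+M+1)^2*(2*M+2)*(2*M+1)*(K+1)^4*(M+2)^4)" unfolding B_def
      apply (rule hdiv)
      apply (use nz d0 in simp)
     apply (use nz d0 in simp)
    apply (rule id1)
    done
    finally show ?thesis .
  qed
  have e2: "fr (n+2) k = B * ((K+M+2)^2*(K+M+1)^2*(2*M+4)*(2*M+3)*(2*M+2)*(2*M+1)*(K+1)^4)"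
  proof -
    have "fr (n+2) k = ((K+M+2)*(K+M+1)*fn)^2 * f2k * ((2*M+4)*(2*M+3)*(2*M+2)*(2*M+1)*f2m) / (fk^4 * ((M+2)*(M+1)*fm)^4)"
      using fr_fact[of k "k+m+2"] unfolding nm fn2[symmetric] fm2[symmetric] f2m2[symmetric] fk_def f2k_def
      by (simp add: mult_2_right)
    also have "\<dots> = B * ((K+M+2)^2*(K+M+1)^2*(2*M+4)*(2*M+3)*(2*M+2)*(2*M+1)*(K+1)^4)" unfolding B_def
      apply (rule hdiv)
      apply (use nz d0 in simp)
     apply (use nz d0 in simp)
    apply (rule id2)
    done
    finally show ?thesis .
  qed
  have e3: "fr (n+2) (k+1) = B * ((K+M+2)^2*(K+M+1)^2*(2*K+2)*(2*K+1)*(2*M+2)*(2*M+1)*(M+2)^4)"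
  proof -
    have "fr (n+2) (k+1) = ((K+M+2)*(K+M+1)*fn)^2 * ((2*K+2)*(2*K+1)*f2k) * ((2*M+2)*(2*M+1)*f2m) / (((K+1)*fk)^4 * ((M+1)*fm)^4)"
      using fr_fact[of "k+1" "k+m+2"] unfolding nm fn2[symmetric] fm1[symmetric] f2m1[symmetric] fk1[symmetric] f2k1[symmetric]
      by (simp add: mult_2_right)
    also have "\<dots> = B * ((K+M+2)^2*(K+M+1)^2*(2*K+2)*(2*K+1)*(2*M+2)*(2*M+1)*(M+2)^4)" unfolding B_def
      apply (rule hdiv)
      apply (use nz d0 in simp)
     apply (use nz d0 in simp)
    apply (rule id3)
    done
    finally show ?thesis .
  qed
  define E where "E = (K+M+1)^2*(K+M+2)^3*(2*M+1)"
  have Enz: "E \<noteq> 0" unfolding E_def using K0 M0 by auto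
  have m1: "2*M - 1 \<noteq> 0"
  proof
    assume "2*M - 1 = 0"
    hence "real (2*m) = real 1" unfolding M_def by simp
    hence "2*m = 1" by (simp only: of_nat_eq_iff)
    thus False by presburger
  qed
  have m3: "2*M + 3 \<noteq> 0" using M0 by linarith
  have rn: "real n = K + M" unfolding nm K_def M_def by simp
  define Tv where "Tv = (K+M+2)^3*(K+M+2)^2*(K+M+1)^2*(2*M+4)*(2*M+3)*(2*M+2)*(2*M+1)*(K+1)^4
          - 2*(2*(K+M)+3)*(5*(K+M)^2+15*(K+M)+12)*(K+M+1)^2*(2*M+2)*(2*M+1)*(K+1)^4*(M+2)^4
          + 64*(K+M+1)^3*(K+1)^4*(M+1)^4*(M+2)^4"
  define p1v where "p1v = (K+M+2)^2*(K+M+1)^2*(2*K+2)*(2*K+1)*(2*M+2)*(2*M+1)*(M+2)^4*(K+1)^3*Qp (K+M) (K+1)"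
  define p0v where "p0v = (K+M+2)^2*(K+M+1)^2*(2*M+4)*(2*M+3)*(2*M+2)*(2*M+1)*(K+1)^4*K^3*Qp (K+M) K"
  have hT: "tt n k = B * Tv"
    unfolding tt_def e0 e1 e2 rn Tv_def by (rule idT)
  have hg1: "gg n (k+1) = B*p1v / (E*(2*M-1))"
  proof -
    have "(real n+1)^2*(real n+2)^3*(2*real n-2*real (k+1)+1)*(2*real n-2*real (k+1)+3) = E*(2*M-1)"
      unfolding E_def rn K_def by (simp add: algebra_simps)
    moreover have "Qp (real n) (real (k+1)) = Qp (K+M) (K+1)" unfolding rn K_def by (simp add: add.commute)
    moreover have "real (k+1)^3 = (K+1)^3" unfolding K_def by (simp add: add.commute)
    ultimately show ?thesis unfolding gg_def e3 p1v_def by (simp add: mult.assoc add.commute)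
  qed
  have hg0: "gg n k = B*p0v / (E*(2*M+3))"
  proof -
    have "(real n+1)^2*(real n+2)^3*(2*real n-2*real k+1)*(2*real n-2*real k+3) = E*(2*M+3)"
      unfolding E_def rn K_def by (simp add: algebra_simps)
    moreover have "Qp (real n) (real k) = Qp (K+M) K" unfolding rn K_def by simp
    ultimately show ?thesis unfolding gg_def e2 K_def p0v_def by (simp add: mult.assoc)
  qed
  have pid: "Tv * E * (2*M-1) * (2*M+3) = p1v*(2*M+3) - p0v*(2*M-1)"
    unfolding Tv_def p1v_def p0v_def E_def by (rule poly_id)
  have "gg n (k+1) - gg n k = B*(p1v*(2*M+3) - p0v*(2*M-1))/(E*(2*M-1)*(2*M+3))"
    unfolding hg1 hg0 by (rule frac_comb[OF Enz m1 m3])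
  also have "\<dots> = B*(Tv*E*(2*M-1)*(2*M+3))/(E*(2*M-1)*(2*M+3))" unfolding pid ..
  also have "\<dots> = B*Tv" by (rule cancel3[OF Enz m1 m3])
  finally show ?thesis unfolding hT by simp
qed

lemma Qp_top: fixes N :: real shows "Qp N (N+2) = -3*(N+1)^2*(N+2)^3"
  unfolding Qp_def by algebra

lemma Qp_n1: fixes N :: real shows
  "2*(N+1)*Qp N (N+1) = (N+2)*(2*(N+2)^5 - 2*(2*N+3)*(5*N^2+15*N+12) + (2*N+4)*(2*N+3)*(N+2))"
  unfolding Qp_def by algebra

lemma bnd1: fixes N c :: real assumes N0: "N \<ge> 0" shows
 "(N+2)^3*(2*(N+2)^2*c) - 2*(2*N+3)*(5*N^2+15*N+12)*c
  = ((2*N+4)*(2*N+3)/(N+2)^2*c)*(N+2)^3*Qp N (N+2)/((N+1)^2*(N+2)^3*(-3)*(-1))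
  - (2*(N+2)^2*c)*(N+1)^3*Qp N (N+1)/((N+1)^2*(N+2)^3*(-1)*1)"
proof -
  have nz: "N+1 \<noteq> 0" "N+2 \<noteq> 0" using N0 by auto
  define q where "q = Qp N (N+1)"
  define S where "S = 2*(N+2)^5 - 2*(2*N+3)*(5*N^2+15*N+12) + (2*N+4)*(2*N+3)*(N+2)"
  have hq: "2*(N+1)*q = (N+2)*S" unfolding q_def S_def by (rule Qp_n1)
  have t1: "((2*N+4)*(2*N+3)/(N+2)^2*c)*(N+2)^3*Qp N (N+2)/((N+1)^2*(N+2)^3*(-3)*(-1)) = -((2*N+4)*(2*N+3)*(N+2)*c)"
    unfolding Qp_top using nz by (simp add: field_simps) algebra
  have t2: "(2*(N+2)^2*c)*(N+1)^3*q/((N+1)^2*(N+2)^3*(-1)*1) = -((2*(N+1)*q)*c/(N+2))"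
    using nz by (simp add: field_simps) algebra
  have t3: "(2*(N+1)*q)*c/(N+2) = S*c" unfolding hq using nz by simp
  show ?thesis unfolding q_def[symmetric] t1 t2 t3 unfolding S_def by (simp add: algebra_simps)
qed

lemma tele_n1: "tt n (n+1) = gg n (n+2) - gg n (n+1)"
proof -
  define N where "N = real n"
  define c where "c = (fact (2*(n+1)) / (fact (n+1))^2 :: real)"
  have N0: "N \<ge> 0" unfolding N_def by simp
  have fnz: "fact (n+1) \<noteq> (0::real)" by simp
  have A: "fr n (n+1) = 0" by (simp add: fr_zero)
  have f2: "fact (n+2) = (N+2) * (fact (n+1) :: real)" unfolding N_def
    by (simp add: eval_nat_numeral algebra_simps)
  define a where "a = (fact (n+1) :: real)"
  define b where "b = (fact (2*(n+1)) :: real)"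
  have anz: "a \<noteq> 0" unfolding a_def by simp
  have f2': "fact (n+2) = (N+2) * a" unfolding a_def by (rule f2)
  have f4: "fact (2*(n+2)) = (2*N+4)*(2*N+3) * b" unfolding N_def b_def
    by (simp add: eval_nat_numeral algebra_simps)
  have B: "fr (n+1) (n+1) = c"
  proof -
    have "fr (n+1) (n+1) = a^2 * b / a^4"
      using fr_fact[of "n+1" "n+1", unfolded b_def[symmetric] a_def[symmetric]] by simp
    also have "\<dots> = c" unfolding c_def a_def[symmetric] b_def[symmetric]
      using anz by (simp add: field_simps power_mult_distrib eval_nat_numeral)
    finally show ?thesis .
  qed
  have C: "fr (n+2) (n+1) = 2*(N+2)^2*c"
  proof -
    have "fr (n+2) (n+1) = ((N+2)*a)^2 * b * 2 / a^4"
      using fr_fact[of "n+1" "n+2", unfolded f2' b_def[symmetric] a_def[symmetric]] by (simp add: eval_nat_numeral)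
    also have "\<dots> = 2*(N+2)^2*c" unfolding c_def a_def[symmetric] b_def[symmetric]
      using anz N0 unfolding power_mult_distrib by (simp add: field_simps)
    finally show ?thesis .
  qed
  have D: "fr (n+2) (n+2) = (2*N+4)*(2*N+3)/(N+2)^2*c"
  proof -
    have "fr (n+2) (n+2) = ((N+2)*a)^2 * ((2*N+4)*(2*N+3)*b) / ((N+2)*a)^4"
      using fr_fact[of "n+2" "n+2", unfolded f2' f4] by simp
    also have "\<dots> = (2*N+4)*(2*N+3)/(N+2)^2*c" unfolding c_def a_def[symmetric] b_def[symmetric]
      using anz N0 unfolding power_mult_distrib by (simp add: field_simps)
    finally show ?thesis .
  qed
  have r1: "real (n+1) = N+1" "real (n+2) = N+2" unfolding N_def by simp_all
  have d1: "2*N - 2*(N+1) + 1 = -1" "2*N - 2*(N+1) + 3 = 1" "2*N - 2*(N+2) + 1 = -3" "2*N - 2*(N+2) + 3 = -1"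
    by simp_all
  show ?thesis
    unfolding tt_def gg_def A B C D r1 N_def[symmetric] d1
    using bnd1[OF N0, of c] by simp
qed

lemma tele_n2: "tt n (n+2) = gg n (n+3) - gg n (n+2)"
proof -
  define N where "N = real n"
  have N0: "N \<ge> 0" unfolding N_def by simp
  have a: "fr n (n+2) = 0" "fr (n+1) (n+2) = 0" "fr (n+2) (n+3) = 0" by (simp_all add: fr_zero)
  have r1: "real (n+2) = N+2" unfolding N_def by simp_all
  have d1: "2*N - 2*(N+2) + 1 = -3" "2*N - 2*(N+2) + 3 = -1" by simp_all
  have nz: "N+1 \<noteq> 0" "N+2 \<noteq> 0" using N0 by auto
  show ?thesis
    unfolding tt_def gg_def a r1 N_def[symmetric] d1 Qp_top using nz by (simp add: field_simps)
qed

lemma tele_all: "k \<le> n+2 \<Longrightarrow> tt n k = gg n (Suc k) - gg n k"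
proof -
  assume "k \<le> n+2"
  hence "k \<le> n \<or> k = n+1 \<or> k = n+2" by linarith
  thus ?thesis using tele_generic[of k n] tele_n1[of n] tele_n2[of n] by (auto simp: eval_nat_numeral)
qed

lemma tt_sum: "(\<Sum>k=0..n+2. tt n k) = 0"
proof -
  have "(\<Sum>k=0..n+2. tt n k) = (\<Sum>k=0..n+2. gg n (Suc k) - gg n k)"
    by (rule sum.cong) (auto intro: tele_all)
  also have "\<dots> = gg n (Suc (n+2)) - gg n 0" by (rule sum_Suc_diff) simp
  also have "\<dots> = 0" unfolding gg_def by (simp add: fr_zero)
  finally show ?thesis .
qed

lemma domb_real_ext: "n \<le> N \<Longrightarrow> real (domb n) = (\<Sum>k=0..N. fr n k)"
proof (induction N rule: dec_induct)
  case base
  show ?case unfolding domb_def fr_def by simp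
next
  case (step N)
  thus ?case by (simp add: fr_zero)
qed

lemma domb_rec: "(real n+2)^3 * real (domb (n+2)) = 2*(2*real n+3)*(5*real n^2+15*real n+12) * real (domb (n+1)) - 64*(real n+1)^3 * real (domb n)"
proof -
  have "0 = (\<Sum>k=0..n+2. tt n k)" using tt_sum by simp
  also have "\<dots> = (real n+2)^3 * (\<Sum>k=0..n+2. fr (n+2) k) - 2*(2*real n+3)*(5*real n^2+15*real n+12) * (\<Sum>k=0..n+2. fr (n+1) k) + 64*(real n+1)^3 * (\<Sum>k=0..n+2. fr n k)"
    unfolding tt_def by (simp only: sum.distrib sum_subtractf sum_distrib_left)
  also have "\<dots> = (real n+2)^3 * real (domb (n+2)) - 2*(2*real n+3)*(5*real n^2+15*real n+12) * real (domb (n+1)) + 64*(real n+1)^3 * real (domb n)"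
    using domb_real_ext[of n "n+2"] domb_real_ext[of "n+1" "n+2"] domb_real_ext[of "n+2" "n+2"] by simp
  finally show ?thesis by linarith
qed




fun hor :: "real list \<Rightarrow> real \<Rightarrow> real" where
  "hor [] m = 0"
| "hor (c # cs) m = c + m * hor cs m"

lemma hor_nonneg: "(\<forall>c\<in>set cs. 0 \<le> c) \<Longrightarrow> 0 \<le> m \<Longrightarrow> 0 \<le> hor cs m"
  by (induction cs) auto

definition Aq :: "real \<Rightarrow> real" where "Aq t = 2*(2*t+1)*(5*t^2+5*t+2)"

definition Fh :: "real \<Rightarrow> real \<Rightarrow> real \<Rightarrow> real" where
 "Fh n X d = X^6*(n+2)^9*(Aq (n+2) * (Aq (n+1) * X - 64*(n+1)^3*d) - 64*(n+2)^6*X)*(Aq n * d - (n+1)^3*X)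
    - 64*n^3*(n+3)^3*(Aq (n+1) * X - 64*(n+1)^3*d)^4*d^4"

definition Fx :: "real \<Rightarrow> real \<Rightarrow> real" where
 "Fx n x = x^6*(n+2)^9*(Aq (n+2) * (Aq (n+1) * x - 64*(n+1)^3) - 64*(n+2)^6*x)*(Aq n - (n+1)^3*x)
    - 64*n^3*(n+3)^3*(Aq (n+1) * x - 64*(n+1)^3)^4"

lemma bern_ident: "Fh (m+2) ((16*(m+2)-8)*(2*(m+2)+3) + 24*s) ((m+2+1)*(2*(m+2)+3)) = (hor [230008463347353901162158882816, 2699300544247575825508227612672, 15203397616437206489174705700864, 54749744825742511606598738116608, 141689433783256487354181391220736, 280813475771884087939564585353216, 443509171814436572499034798817280, 573506495919947671101669302599680, 619082296283776186775108981882880, 565965133073341899242415669116928, 443012786712616768290213467258880, 299422746216144689587769982320640, 175879037063733133994177247313920, 90231142058758169106197111635968, 40580045112007167744281640173568, 16040119187247554987286369140736, 5581363426247445257847186653184, 1710841393931411767105733787648, 461874694596682053126167986176, 109696368802059058282588274688, 22871574068953818043307261952, 4172941292125999100508241920, 663262924161427883088150528, 91288128329173706125344768, 10793873930626483982696448, 1084989442651911182352384, 91433359802602327375872, 6338575188384452444160, 351994392670390714368, 15053901329288134656, 465484294932922368, 9262285952385024, 89060441849856] m)*s^0*(1-s)^8 + (hor [2021427026609447466673517887488, 23321402730148649286542781579264, 129239189248948006408184112611328, 458296039674777672131189510504448, 1168876694603012535835244900646912, 2284900666017757676741466418839552, 3562158123538566279633639063945216, 4550339389484918824890667131469824, 4855922506211391551271892873641984,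 4391800191792237790720887927865344, 3403285263201182960827059620806656, 2278680976490038493873499386413056, 1326797623642440350789770992943104, 675152848297814355789349946130432, 301345487620076632317390495940608, 118278694886052816464219530592256, 40889858418059753493792471121920, 12458938855008349910736052420608, 3345044109777940545404701507584, 790456902062496407917562953728, 164053105801896905882770341888, 29807148985988601187487711232, 4719922445668496567307337728, 647456120439385033159999488, 76329366916582484289257472, 7652893880112559404613632, 643509804232630509502464, 44530173432210432983040, 2469282107619362734080, 105490831681561559040, 3259557745879154688, 64836001666695168, 623423092948992] m)*s^1*(1-s)^7 + (hor [7656171611091379372947759169536, 86847033731030515603419200225280, 473578274665643245605585527242752, 1653822619039706135685080505384960, 4157191106776580934756297338781696, 8015366930740695986674843791654912, 12334511073241492581503538353405952, 15564077431610429593438917419335680, 16418361724104935386347100667117568, 14688438911357212712976068219240448, 11266565119180254318934288383344640, 7471546089497629689807523081617408, 4311494007624632124215545835814912, 2175568523219873628433496722636800, 963438151233583145644626511134720, 375392146923738384255178311204864, 128894858540993544202610188222464, 39026152286762452977053916463104, 10416863007393028736112346005504, 2448345340081250767073005535232, 505628293249748898956697403392, 91455080017490509147391655936, 14422703777201597344357810176, 1971184556621138734545371136, 231628521980098930915934208, 23157207695810210417344512, 1942457870041875430244352, 134141249503490444623872, 7426190303688847785984, 316864865664661192704, 9782720539939307520, 194508005000085504, 1870269278846976] m)*s^2*(1-s)^6 + (hor [16273797912960879363651734077440, 181507654173650062180686520909824, 973943571289314838711670308601856, 3349403272220432154240769396310016, 8297410575957348448998178947072000, 15777905663753124293610226348720128,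 23962994454635826005561596780216320, 29863132405880038885754878870683648, 31133184725907278537906782589681664, 27544133818651182808043868401958912, 20906043275380921174088671089917952, 13726949017675286637080403221938176, 7847307007486245980185809691607040, 3924924149731545723136366312685568, 1723753754780438849348770254028800, 666420547935690899006287748530176, 227154887981479943431950591590400, 68307833271621514757614690369536, 18116717052521400430661216501760, 4232900339728761242463649136640, 869383181680188140731288780800, 156455777997673656872551317504, 24559673476468301678864498688, 3342592549028288855355162624, 391306864298251595915722752, 38991666465174674271633408, 3261301966487171937337344, 224673899106882425978880, 12413901781592067538944, 528900203115309957120, 16312731092417249280, 324180008333475840, 3117115464744960] m)*s^3*(1-s)^5 + (hor [21137701574607751549586830786560, 231786866960330469127263092736000, 1223704681287239560325925489868800, 4143572710101799147751119748333568, 10113959233953582335704224686407680, 18962484700450352709196904059109376, 28414475338782229143430592741769216, 34959153829182368733674409427992576, 36003053100234210543775434173054976, 31483821849857100825985192959148032, 23632762489774761373568794858881024, 15354397265235364884254744962400256, 8689964768601941000313200613261312, 4305081225867852005201573937414144, 1873633594531396549557507034447872, 718153833530197978295983908323328, 242798514275207796172416928972800, 72450372112982492484105085648896, 19075884227125312243798351282176, 4426558369349403215574702489600, 903339088889621068200762408960, 161596933997599130760983347200, 25226686259373220392452751360, 3415989352420178498735308800, 398063148589703296702218240, 39502241469350740827832320, 3292149741097124490117120, 226106559922508943851520, 12461920632377966592000, 529934046411117035520, 16323467823462481920, 324180008333475840, 3117115464744960] m)*s^4*(1-s)^4 + (hor [17059214951930458254407173668864, 183863828039114308716377866764288, 954745696739708553435350078324736,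 3181814959832063958665520627056640, 7648612271831591350548788378861568, 14131165488877082487997880390909952, 20878086074333945640765857822932992, 25340473759379343112038906838646784, 25758365658189642443848787234390016, 22243467676236378770817971317112832, 16495514972328479497922059979194368, 10592808015128122518238321321181184, 5927961451599085632972167162363904, 2905043476955094680984469437939712, 1251149229959751469838953806299136, 474744933430231214614372675485696, 158953620108441082425184811483136, 46990454755814042396428024676352, 12262065036777233057722839072768, 2821141912082924331848341389312, 571039844903015351889357176832, 101366054012821027140082335744, 15709523963641756674183659520, 2112894022680437598034329600, 244683489010645642726342656, 24144578126427875992141824, 2002161701157949692444672, 136916379113184590561280, 7519283010232331010048, 318870833370073399296, 9803570578936823808, 194508005000085504, 1870269278846976] m)*s^5*(1-s)^3 + (hor [8255758365980358402797324992512, 87404847050312366211427819585536, 446080757169776191059187269107712, 1461890354858648248598539467227136, 3457376117395362420817847421763584, 6287222985949398521379233036500992, 9146702593978524815977777006116864, 10935575351259248753291281601396736, 10953251187358520209753367598071808, 9322999085446013592602667481300992, 6816555557823824397296646091702272, 4316801992440541052483924675002368, 2382892523304772467687093958606848, 1152094508669465610948013203652608, 489625369235854241255992326094848, 183364328513976902332061784735744, 60604627037392968758266278445056, 17689336911400840284401678942208, 4558550017119428595604556611584, 1035995432992757866421412691968, 207203567332602172223225069568, 36355910293386998018186674176, 5571641923862275775898058752, 741414030496271261912530944, 85000623965439761942839296, 8309901865883003856617472, 683310085547065589366784, 46383563122622123212800, 2531569762252829491200, 106835495919424634880, 3273560026458882048, 64836001666695168, 623423092948992] m)*s^6*(1-s)^2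 + (hor [2142751624593867204122885750784, 22253934220232211274066129059840, 111447089103436627948161076297728, 358470496421580104540308289617920, 832223271191265098335188997373952, 1485763407771599112498366853939200, 2122108078664164176178704436690944, 2490823029985506390855265214791680, 2449065111332901529732227237150720, 2045966552900465382588554680467456, 1467895921190526980356921393938432, 911915576821435077279919430959104, 493637704204182619148441106776064, 233953078764952822908471805476864, 97419507741822330870188910575616, 35729422014249688342417870159872, 11559060672128299294811423244288, 3300704536131068797872116858880, 831723402486616062646800089088, 184741584957027837201805737984, 36098658550547133705851240448, 6186472090369992673305034752, 925958548772185864434352128, 120360180775026272042483712, 13485608676025870269284352, 1289607459300607820562432, 103869668616578009137152, 6919617563859376668672, 371586325520867917824, 15478244647888748544, 469917525816115200, 9262285952385024, 89060441849856] m)*s^7*(1-s)^1 + (hor [217550463692050289047633920000, 2208765932767382328844165840896, 10808424524295914118739597983744, 33949323651811506176380247212032, 76906906157824157729734376030208, 133847122046433992426992963682304, 186148546811461812135757011222528, 212455473803780780671445351006208, 202789692591227491977472719716352, 164143259534535007518935394287616, 113843478535899038207555904995328, 68185492711128363379009492353024, 35473450334723590913921264910336, 16098153933197975441488176218112, 6390819989223857874965373124608, 2223170111062102620698025394176, 678063900267241168430671331328, 181228713497775797998385627136, 42377655328738430808829722624, 8645227605738912079650226176, 1532267394721574785275396096, 234587486250640846356480000, 30783549952219388993077248, 3426805056375557273419776, 319160435637119656919040, 24405457319851204804608, 1492084005662311317504, 70121479130862059520, 2378133974594617344, 51803490342666240, 544258255749120] m)*s^8*(1-s)^0"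
  unfolding Fh_def Aq_def hor.simps by algebra

lemma bern_nonneg: assumes "0 \<le> m" "0 \<le> s" "s \<le> 1"
  shows "0 \<le> (hor [230008463347353901162158882816, 2699300544247575825508227612672, 15203397616437206489174705700864, 54749744825742511606598738116608, 141689433783256487354181391220736, 280813475771884087939564585353216, 443509171814436572499034798817280, 573506495919947671101669302599680, 619082296283776186775108981882880, 565965133073341899242415669116928, 443012786712616768290213467258880, 299422746216144689587769982320640, 175879037063733133994177247313920, 90231142058758169106197111635968, 40580045112007167744281640173568, 16040119187247554987286369140736, 5581363426247445257847186653184, 1710841393931411767105733787648, 461874694596682053126167986176, 109696368802059058282588274688, 22871574068953818043307261952, 4172941292125999100508241920, 663262924161427883088150528, 91288128329173706125344768, 10793873930626483982696448, 1084989442651911182352384, 91433359802602327375872, 6338575188384452444160, 351994392670390714368, 15053901329288134656, 465484294932922368, 9262285952385024, 89060441849856] m)*s^0*(1-s)^8 + (hor [2021427026609447466673517887488, 23321402730148649286542781579264, 129239189248948006408184112611328, 458296039674777672131189510504448, 1168876694603012535835244900646912, 2284900666017757676741466418839552, 3562158123538566279633639063945216, 4550339389484918824890667131469824, 4855922506211391551271892873641984, 4391800191792237790720887927865344, 3403285263201182960827059620806656, 2278680976490038493873499386413056, 1326797623642440350789770992943104, 675152848297814355789349946130432, 301345487620076632317390495940608, 118278694886052816464219530592256, 40889858418059753493792471121920, 12458938855008349910736052420608, 3345044109777940545404701507584, 790456902062496407917562953728, 164053105801896905882770341888, 29807148985988601187487711232, 4719922445668496567307337728, 647456120439385033159999488,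 76329366916582484289257472, 7652893880112559404613632, 643509804232630509502464, 44530173432210432983040, 2469282107619362734080, 105490831681561559040, 3259557745879154688, 64836001666695168, 623423092948992] m)*s^1*(1-s)^7 + (hor [7656171611091379372947759169536, 86847033731030515603419200225280, 473578274665643245605585527242752, 1653822619039706135685080505384960, 4157191106776580934756297338781696, 8015366930740695986674843791654912, 12334511073241492581503538353405952, 15564077431610429593438917419335680, 16418361724104935386347100667117568, 14688438911357212712976068219240448, 11266565119180254318934288383344640, 7471546089497629689807523081617408, 4311494007624632124215545835814912, 2175568523219873628433496722636800, 963438151233583145644626511134720, 375392146923738384255178311204864, 128894858540993544202610188222464, 39026152286762452977053916463104, 10416863007393028736112346005504, 2448345340081250767073005535232, 505628293249748898956697403392, 91455080017490509147391655936, 14422703777201597344357810176, 1971184556621138734545371136, 231628521980098930915934208, 23157207695810210417344512, 1942457870041875430244352, 134141249503490444623872, 7426190303688847785984, 316864865664661192704, 9782720539939307520, 194508005000085504, 1870269278846976] m)*s^2*(1-s)^6 + (hor [16273797912960879363651734077440, 181507654173650062180686520909824, 973943571289314838711670308601856, 3349403272220432154240769396310016, 8297410575957348448998178947072000, 15777905663753124293610226348720128, 23962994454635826005561596780216320, 29863132405880038885754878870683648, 31133184725907278537906782589681664, 27544133818651182808043868401958912, 20906043275380921174088671089917952, 13726949017675286637080403221938176, 7847307007486245980185809691607040, 3924924149731545723136366312685568, 1723753754780438849348770254028800, 666420547935690899006287748530176, 227154887981479943431950591590400, 68307833271621514757614690369536, 18116717052521400430661216501760, 4232900339728761242463649136640,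 869383181680188140731288780800, 156455777997673656872551317504, 24559673476468301678864498688, 3342592549028288855355162624, 391306864298251595915722752, 38991666465174674271633408, 3261301966487171937337344, 224673899106882425978880, 12413901781592067538944, 528900203115309957120, 16312731092417249280, 324180008333475840, 3117115464744960] m)*s^3*(1-s)^5 + (hor [21137701574607751549586830786560, 231786866960330469127263092736000, 1223704681287239560325925489868800, 4143572710101799147751119748333568, 10113959233953582335704224686407680, 18962484700450352709196904059109376, 28414475338782229143430592741769216, 34959153829182368733674409427992576, 36003053100234210543775434173054976, 31483821849857100825985192959148032, 23632762489774761373568794858881024, 15354397265235364884254744962400256, 8689964768601941000313200613261312, 4305081225867852005201573937414144, 1873633594531396549557507034447872, 718153833530197978295983908323328, 242798514275207796172416928972800, 72450372112982492484105085648896, 19075884227125312243798351282176, 4426558369349403215574702489600, 903339088889621068200762408960, 161596933997599130760983347200, 25226686259373220392452751360, 3415989352420178498735308800, 398063148589703296702218240, 39502241469350740827832320, 3292149741097124490117120, 226106559922508943851520, 12461920632377966592000, 529934046411117035520, 16323467823462481920, 324180008333475840, 3117115464744960] m)*s^4*(1-s)^4 + (hor [17059214951930458254407173668864, 183863828039114308716377866764288, 954745696739708553435350078324736, 3181814959832063958665520627056640, 7648612271831591350548788378861568, 14131165488877082487997880390909952, 20878086074333945640765857822932992, 25340473759379343112038906838646784, 25758365658189642443848787234390016, 22243467676236378770817971317112832, 16495514972328479497922059979194368, 10592808015128122518238321321181184, 5927961451599085632972167162363904, 2905043476955094680984469437939712, 1251149229959751469838953806299136, 474744933430231214614372675485696,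 158953620108441082425184811483136, 46990454755814042396428024676352, 12262065036777233057722839072768, 2821141912082924331848341389312, 571039844903015351889357176832, 101366054012821027140082335744, 15709523963641756674183659520, 2112894022680437598034329600, 244683489010645642726342656, 24144578126427875992141824, 2002161701157949692444672, 136916379113184590561280, 7519283010232331010048, 318870833370073399296, 9803570578936823808, 194508005000085504, 1870269278846976] m)*s^5*(1-s)^3 + (hor [8255758365980358402797324992512, 87404847050312366211427819585536, 446080757169776191059187269107712, 1461890354858648248598539467227136, 3457376117395362420817847421763584, 6287222985949398521379233036500992, 9146702593978524815977777006116864, 10935575351259248753291281601396736, 10953251187358520209753367598071808, 9322999085446013592602667481300992, 6816555557823824397296646091702272, 4316801992440541052483924675002368, 2382892523304772467687093958606848, 1152094508669465610948013203652608, 489625369235854241255992326094848, 183364328513976902332061784735744, 60604627037392968758266278445056, 17689336911400840284401678942208, 4558550017119428595604556611584, 1035995432992757866421412691968, 207203567332602172223225069568, 36355910293386998018186674176, 5571641923862275775898058752, 741414030496271261912530944, 85000623965439761942839296, 8309901865883003856617472, 683310085547065589366784, 46383563122622123212800, 2531569762252829491200, 106835495919424634880, 3273560026458882048, 64836001666695168, 623423092948992] m)*s^6*(1-s)^2 + (hor [2142751624593867204122885750784, 22253934220232211274066129059840, 111447089103436627948161076297728, 358470496421580104540308289617920, 832223271191265098335188997373952, 1485763407771599112498366853939200, 2122108078664164176178704436690944, 2490823029985506390855265214791680, 2449065111332901529732227237150720, 2045966552900465382588554680467456, 1467895921190526980356921393938432, 911915576821435077279919430959104, 493637704204182619148441106776064,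 233953078764952822908471805476864, 97419507741822330870188910575616, 35729422014249688342417870159872, 11559060672128299294811423244288, 3300704536131068797872116858880, 831723402486616062646800089088, 184741584957027837201805737984, 36098658550547133705851240448, 6186472090369992673305034752, 925958548772185864434352128, 120360180775026272042483712, 13485608676025870269284352, 1289607459300607820562432, 103869668616578009137152, 6919617563859376668672, 371586325520867917824, 15478244647888748544, 469917525816115200, 9262285952385024, 89060441849856] m)*s^7*(1-s)^1 + (hor [217550463692050289047633920000, 2208765932767382328844165840896, 10808424524295914118739597983744, 33949323651811506176380247212032, 76906906157824157729734376030208, 133847122046433992426992963682304, 186148546811461812135757011222528, 212455473803780780671445351006208, 202789692591227491977472719716352, 164143259534535007518935394287616, 113843478535899038207555904995328, 68185492711128363379009492353024, 35473450334723590913921264910336, 16098153933197975441488176218112, 6390819989223857874965373124608, 2223170111062102620698025394176, 678063900267241168430671331328, 181228713497775797998385627136, 42377655328738430808829722624, 8645227605738912079650226176, 1532267394721574785275396096, 234587486250640846356480000, 30783549952219388993077248, 3426805056375557273419776, 319160435637119656919040, 24405457319851204804608, 1492084005662311317504, 70121479130862059520, 2378133974594617344, 51803490342666240, 544258255749120] m)*s^8*(1-s)^0"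
proof -
  have s1: "0 \<le> 1 - s" using assms by simp
  show ?thesis
    by (intro add_nonneg_nonneg mult_nonneg_nonneg zero_le_power hor_nonneg s1 assms(1,2); simp)
qed

lemma homog: "((n+1)*(2*n+3))^8 * Fx n x = Fh n ((n+1)*(2*n+3)*x) ((n+1)*(2*n+3))"
  unfolding Fh_def Fx_def Aq_def by algebra

lemma keyF:
  fixes n x :: real
  assumes n2: "n \<ge> 2" and lo: "(16*n-8)/(n+1) \<le> x" and up: "x \<le> 32*n/(2*n+3)"
  shows "0 \<le> Fx n x"
proof -
  define d where "d = (n+1)*(2*n+3)"
  have dpos: "d > 0" using n2 unfolding d_def by simp
  define s where "s = (d*x - (16*n-8)*(2*n+3))/24"
  define m where "m = n - 2"
  have m0: "0 \<le> m" using n2 unfolding m_def by simp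
  have "(16*n-8)*(2*n+3) \<le> d*x"
  proof -
    have "(16*n-8) \<le> x*(n+1)" using lo n2 by (simp add: divide_le_eq)
    hence "(16*n-8)*(2*n+3) \<le> x*(n+1)*(2*n+3)" using n2 by (intro mult_right_mono) auto
    thus ?thesis unfolding d_def by (simp add: algebra_simps)
  qed
  hence s0: "0 \<le> s" unfolding s_def by simp
  have "d*x \<le> 32*n*(n+1)"
  proof -
    have "x*(2*n+3) \<le> 32*n" using up n2 by (simp add: le_divide_eq)
    hence "x*(2*n+3)*(n+1) \<le> 32*n*(n+1)" using n2 by (intro mult_right_mono) auto
    thus ?thesis unfolding d_def by (simp add: algebra_simps)
  qed
  hence s1: "s \<le> 1" unfolding s_def by (simp add: algebra_simps)
  have dx: "d*x = (16*(m+2)-8)*(2*(m+2)+3) + 24*s" unfolding s_def m_def by (simp add: field_simps)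
  have nm: "n = m + 2" unfolding m_def by simp
  have "d^8 * Fx n x = Fh n (d*x) d" unfolding d_def by (rule homog)
  also have "\<dots> = Fh (m+2) ((16*(m+2)-8)*(2*(m+2)+3) + 24*s) ((m+2+1)*(2*(m+2)+3))"
    using dx nm unfolding d_def by simp
  also have "\<dots> \<ge> 0" unfolding bern_ident using bern_nonneg[OF m0 s0 s1] .
  finally have "0 \<le> d^8 * Fx n x" .
  thus ?thesis using dpos by (simp add: zero_le_mult_iff)
qed

section \<open>Positivity, ratios and the recurrence for the ratios\<close>

lemma domb_pos: "real (domb n) > 0"
proof -
  have "real (domb n) = (\<Sum>k=0..n. fr n k)" using domb_real_ext[of n n] by simp
  also have "\<dots> > 0"
  proof (rule sum_pos2[of "{0..n}" 0])
    show "0 < fr n 0" unfolding fr_def by simp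
  qed (auto simp: fr_def)
  finally show ?thesis .
qed

lemma domb_0: "domb 0 = 1" by (simp add: domb_def)
lemma domb_1: "domb 1 = 4" by (simp add: domb_def eval_nat_numeral)

lemma domb_2: "real (domb 2) = 28"
  using domb_rec[of 0] domb_0 domb_1 by (simp add: eval_nat_numeral)
lemma domb_3: "real (domb 3) = 256"
  using domb_rec[of 1] domb_1 domb_2 by (simp add: eval_nat_numeral)
lemma domb_4: "real (domb 4) = 2716"
  using domb_rec[of 2] domb_2 domb_3 by (simp add: eval_nat_numeral)

definition rr :: "nat \<Rightarrow> real" where "rr n = real (domb (n+1)) / real (domb n)"

lemma rr_pos: "rr n > 0"
  unfolding rr_def using domb_pos[of n] domb_pos[of "n+1"] by simp

lemma Aq_shift: "Aq (N+1) = 2*(2*N+3)*(5*N^2+15*N+12)"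
  unfolding Aq_def by algebra

lemma rr_rec: "(real n+2)^3 * rr (n+1) * rr n = Aq (real n+1) * rr n - 64*(real n+1)^3"
proof -
  define d0 where "d0 = real (domb n)"
  define d1 where "d1 = real (domb (n+1))"
  define d2 where "d2 = real (domb (n+2))"
  have p0: "d0 > 0" and p1: "d1 > 0" unfolding d0_def d1_def using domb_pos by auto
  have rec: "(real n+2)^3 * d2 = Aq (real n+1) * d1 - 64*(real n+1)^3 * d0"
    unfolding Aq_shift d0_def d1_def d2_def by (rule domb_rec)
  have r0: "rr n = d1/d0" unfolding rr_def d0_def d1_def ..
  have r1: "rr (n+1) = d2/d1" unfolding rr_def d2_def d1_def by (simp add: eval_nat_numeral)
  have "(real n+2)^3 * rr (n+1) * rr n = ((real n+2)^3 * d2)/d0"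
    unfolding r0 r1 using p0 p1 by (simp add: field_simps)
  also have "\<dots> = (Aq (real n+1) * d1 - 64*(real n+1)^3 * d0)/d0" unfolding rec ..
  also have "\<dots> = Aq (real n+1) * rr n - 64*(real n+1)^3"
    unfolding r0 using p0 by (simp add: field_simps)
  finally show ?thesis .
qed

lemma rr_next: "rr (n+1) = (Aq (real n+1) - 64*(real n+1)^3 / rr n) / (real n+2)^3"
proof -
  have p: "rr n > 0" by (rule rr_pos)
  have q: "(real n+2)^3 > 0" by simp
  show ?thesis using rr_rec[of n] p q by (simp add: field_simps)
qed

lemma frac_le_frac: fixes x y a b :: real
  assumes "a > 0" "b > 0" "x*b \<le> y*a" shows "x/a \<le> y/b"
  using assms by (simp add: field_simps)

lemma upper_step:
  fixes N :: real assumes N2: "N \<ge> 2"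
  shows "(Aq (N+1) - 64*(N+1)^3 / (32*N/(2*N+3))) / (N+2)^3 \<le> 32*(N+1)/(2*(N+1)+3)"
proof -
  have e: "64*(N+1)^3 / (32*N/(2*N+3)) = 2*(N+1)^3*(2*N+3)/N" using N2 by (simp add: field_simps)
  have e2: "Aq (N+1) - 2*(N+1)^3*(2*N+3)/N = (N*Aq (N+1) - 2*(N+1)^3*(2*N+3))/N"
    using N2 by (simp add: field_simps)
  have key: "32*(N+1)*(N*(N+2)^3) - (N*Aq (N+1) - 2*(N+1)^3*(2*N+3))*(2*(N+1)+3) = 18*N+30"
    unfolding Aq_def by algebra
  have "(N*Aq (N+1) - 2*(N+1)^3*(2*N+3))/(N*(N+2)^3) \<le> 32*(N+1)/(2*(N+1)+3)"
    by (rule frac_le_frac) (use N2 key in auto)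
  thus ?thesis unfolding e e2 using N2 by (simp add: field_simps)
qed

lemma lower_step:
  fixes N :: real assumes N2: "N \<ge> 2"
  shows "(16*(N+1)-8)/((N+1)+1) \<le> (Aq (N+1) - 64*(N+1)^3 / ((16*N-8)/(N+1))) / (N+2)^3"
proof -
  have e: "64*(N+1)^3 / ((16*N-8)/(N+1)) = 8*(N+1)^4/(2*N-1)"
  proof -
    have "16*N-8 = 8*(2*N-1)" by simp
    hence "64*(N+1)^3 / ((16*N-8)/(N+1)) = 64*(N+1)^3*(N+1)/(8*(2*N-1))" using N2 by simp
    also have "\<dots> = 8*(N+1)^4/(2*N-1)" using N2 by (simp add: frac_eq_eq; algebra)
    finally show ?thesis .
  qed
  have e2: "Aq (N+1) - 8*(N+1)^4/(2*N-1) = ((2*N-1)*Aq (N+1) - 8*(N+1)^4)/(2*N-1)"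
    using N2 by (simp add: field_simps)
  have key: "((2*N-1)*Aq (N+1) - 8*(N+1)^4)*(N+2) - (16*(N+1)-8)*((2*N-1)*(N+2)^3)
      = 18*(N-2)^3 + 150*(N-2)^2 + 348*(N-2) + 144"
    unfolding Aq_def by algebra
  have nn: "0 \<le> 18*(N-2)^3 + 150*(N-2)^2 + 348*(N-2) + 144"
    using N2 by (intro add_nonneg_nonneg mult_nonneg_nonneg zero_le_power) auto
  have "(16*(N+1)-8)/((N+1)+1) \<le> ((2*N-1)*Aq (N+1) - 8*(N+1)^4)/((2*N-1)*(N+2)^3)"
    by (rule frac_le_frac) (use N2 key nn in \<open>auto simp: algebra_simps\<close>)
  thus ?thesis unfolding e e2 using N2 by (simp add: field_simps)
qed

lemma rr_bounds:
  assumes "n \<ge> 2"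
  shows "(16*real n-8)/(real n+1) \<le> rr n \<and> rr n \<le> 32*real n/(2*real n+3)"
  using assms
proof (induction n rule: nat_induct_at_least)
  case base
  have "rr 2 = 256/28" unfolding rr_def using domb_2 domb_3 by (simp add: eval_nat_numeral)
  thus ?case by simp
next
  case (Suc n)
  define N where "N = real n"
  have N2: "N \<ge> 2" unfolding N_def using Suc.hyps by simp
  have x0: "rr n > 0" by (rule rr_pos)
  have lo: "(16*N-8)/(N+1) \<le> rr n" and up: "rr n \<le> 32*N/(2*N+3)" using Suc.IH unfolding N_def by auto
  have L0: "(16*N-8)/(N+1) > 0" using N2 by simp
  have rn: "rr (Suc n) = (Aq (N+1) - 64*(N+1)^3 / rr n) / (N+2)^3"
    using rr_next[of n] unfolding N_def by simp
  have c0: "0 \<le> 64*(N+1)^3" using N2 by simp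
  have u1: "64*(N+1)^3 / (32*N/(2*N+3)) \<le> 64*(N+1)^3 / rr n"
    by (rule divide_left_mono[OF up c0]) (use x0 N2 in simp)
  have l1: "64*(N+1)^3 / rr n \<le> 64*(N+1)^3 / ((16*N-8)/(N+1))"
    by (rule divide_left_mono[OF lo c0]) (use mult_pos_pos[OF x0 L0] in simp)
  have p3: "(N+2)^3 > 0" using N2 by simp
  have "rr (Suc n) \<le> (Aq (N+1) - 64*(N+1)^3 / (32*N/(2*N+3))) / (N+2)^3"
    unfolding rn using u1 p3 by (intro divide_right_mono) auto
  also have "\<dots> \<le> 32*(N+1)/(2*(N+1)+3)" by (rule upper_step[OF N2])
  finally have U: "rr (Suc n) \<le> 32*(N+1)/(2*(N+1)+3)" .
  have "(16*(N+1)-8)/((N+1)+1) \<le> (Aq (N+1) - 64*(N+1)^3 / ((16*N-8)/(N+1))) / (N+2)^3"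
    by (rule lower_step[OF N2])
  also have "\<dots> \<le> rr (Suc n)"
    unfolding rn using l1 p3 by (intro divide_right_mono) auto
  finally have L: "(16*(N+1)-8)/((N+1)+1) \<le> rr (Suc n)" .
  show ?case using U L unfolding N_def by (simp add: add.commute)
qed

lemma main_ineq: "rr j * rr (j+2)^3 \<le> rr (j+1)^3 * rr (j+3)"
proof (cases "j = 0")
  case True
  have h0: "rr 0 = 4" unfolding rr_def using domb_0 domb_1 by (simp add: eval_nat_numeral)
  have h1: "rr 1 = 7" unfolding rr_def using domb_1 domb_2 by (simp add: eval_nat_numeral)
  have h2: "rr 2 = 64/7" unfolding rr_def using domb_2 domb_3 by (simp add: eval_nat_numeral)
  have h3: "rr 3 = 679/64" unfolding rr_def using domb_3 domb_4 by (simp add: eval_nat_numeral)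
  show ?thesis unfolding True by (simp only: add_0 h0 h1 h2 h3) (simp add: power_divide)
next
  case False
  define N where "N = real j + 1"
  define a where "a = rr j"
  define x where "x = rr (j+1)"
  define b where "b = rr (j+2)"
  define c where "c = rr (j+3)"
  have N2: "N \<ge> 2" unfolding N_def using False by simp
  have apos: "a > 0" and xpos: "x > 0" and bpos: "b > 0" and cpos: "c > 0"
    unfolding a_def x_def b_def c_def by (simp_all add: rr_pos)
  have E1: "(N+1)^3 * x * a = Aq N * a - 64*N^3"
    using rr_rec[of j] unfolding N_def a_def x_def by (simp add: algebra_simps)
  have E2: "(N+2)^3 * b * x = Aq (N+1) * x - 64*(N+1)^3"
    using rr_rec[of "j+1"] unfolding N_def b_def x_def by (simp add: algebra_simps eval_nat_numeral)
  have E3: "(N+3)^3 * c * b = Aq (N+2) * b - 64*(N+2)^3"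
    using rr_rec[of "j+2"] unfolding N_def b_def c_def by (simp add: algebra_simps eval_nat_numeral)
  have bnds: "(16*N-8)/(N+1) \<le> x" "x \<le> 32*N/(2*N+3)"
    using rr_bounds[of "j+1"] False unfolding N_def x_def by (auto simp: algebra_simps)
  have F: "0 \<le> Fx N x" by (rule keyF[OF N2 bnds])
  define W where "W = Aq N - (N+1)^3 * x"
  have aW: "a * W = 64*N^3" unfolding W_def using E1 by (simp add: algebra_simps)
  have Wpos: "W > 0"
  proof -
    have "a * W > 0" unfolding aW using N2 by simp
    thus ?thesis using apos by (simp add: zero_less_mult_iff)
  qed
  define p where "p = (N+2)^3 * b * x"
  define Mm where "Mm = (N+3)^3*b * (N+2)^3*x * W * (N+2)^9*x^3"
  have Mpos: "Mm > 0" unfolding Mm_def using N2 bpos xpos Wpos by simp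
  have L1: "x^3*c*Mm = x^6*(N+2)^9*(Aq (N+2)*p - 64*(N+2)^6*x)*W"
  proof -
    have "x^3*c*Mm = ((N+3)^3*c*b) * (x^7*(N+2)^12*W)" unfolding Mm_def by algebra
    also have "\<dots> = (Aq (N+2) * b - 64*(N+2)^3) * (x^7*(N+2)^12*W)" unfolding E3 ..
    also have "\<dots> = x^6*(N+2)^9*(Aq (N+2)*p - 64*(N+2)^6*x)*W" unfolding p_def by algebra
    finally show ?thesis .
  qed
  have R1: "a*b^3*Mm = 64*N^3*(N+3)^3*p^4"
  proof -
    have "a*b^3*Mm = (a*W)*(N+3)^3*((N+2)^3*b*x)^4" unfolding Mm_def by algebra
    also have "\<dots> = 64*N^3*(N+3)^3*p^4" unfolding aW p_def ..
    finally show ?thesis .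
  qed
  have pe: "p = Aq (N+1) * x - 64*(N+1)^3" unfolding p_def using E2 by simp
  have "Fx N x = x^3*c*Mm - a*b^3*Mm"
    unfolding L1 R1 Fx_def pe W_def ..
  hence "a*b^3*Mm \<le> x^3*c*Mm" using F by simp
  hence "a*b^3 \<le> x^3*c" using Mpos by simp
  thus ?thesis unfolding a_def b_def x_def c_def by (simp add: mult.commute)
qed

lemma final_frac: fixes a x b c :: real
  assumes "a > 0" "x > 0" "b > 0" "c > 0" "a*b^3 \<le> x^3*c"
  shows "(b/x)^2 \<le> (x/a)*(c/b)"
proof -
  have "(b/x)^2 = (a*b^3)/(a*b*x^2)" using assms by (simp add: field_simps power2_eq_square power3_eq_cube)
  also have "\<dots> \<le> (x^3*c)/(a*b*x^2)" using assms by (intro divide_right_mono) auto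
  also have "\<dots> = (x/a)*(c/b)" using assms by (simp add: field_simps power2_eq_square power3_eq_cube)
  finally show ?thesis .
qed

theorem proposition2p15:
  shows "ratio_log_convex (\<lambda>n. real (domb (n+1)) / real (domb n))"
  unfolding ratio_log_convex_def log_convex_def
proof (intro allI impI)
  fix n :: nat assume "n \<ge> 1"
  then obtain j where nj: "n = Suc j" by (cases n) auto
  have "(rr (j+2)/rr (j+1))^2 \<le> (rr (j+1)/rr j)*(rr (j+3)/rr (j+2))"
    by (rule final_frac) (use main_ineq[of j] in \<open>simp_all add: rr_pos\<close>)
  thus "((real (domb (n+1+1)) / real (domb (n+1))) / (real (domb (n+1)) / real (domb n)))^2
     \<le> ((real (domb (n-1+1+1)) / real (domb (n-1+1))) / (real (domb (n-1+1)) / real (domb (n-1)))) *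
       ((real (domb (n+1+1+1)) / real (domb (n+1+1))) / (real (domb (n+1+1)) / real (domb (n+1))))"
    unfolding nj rr_def by (simp add: eval_nat_numeral)
qed

end
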